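(* Let $M\in\mathrm{M}_n(\mathbb{K})$ be a cyclic matrix with minimal polynomial $f=f_1^{m_1}\cdots f_s^{m_s}$, where $f_1,\dots,f_s\in\mathbb{K}[x]$ are pairwise distinct monic irreducible polynomials and $m_i\ge1$. Then every nonzero $M$-cyclic code $\mathcal{C}\subseteq\mathbb{L}^n$ satisfies $M_1(\mathcal{C})=1$ if and only if $f_1,\dots,f_s$ are all irreducible in $\mathbb{L}[x]$.
   Context: Let $\mathbb{L}/\mathbb{K}$ be a field extension of finite degree $m\ge n$. Vectors are row vectors. For $c=(c_1,\dots,c_n)\in\mathbb{L}^n$, $\mathrm{wt}_R(c)=\dim_{\mathbb{K}}\mathrm{Span}_{\mathbb{K}}(c_1,\dots,c_n)$, and for a nonzero linear code $\mathcal{C}\subseteq\mathbb{L}^n$ (an $\mathbb{L}$-subspace), $M_1(\mathcal{C})=\min\{\mathrm{wt}_R(c):0\neq c\in\mathcal{C}\}$. A matrix $M\in\mathrm{M}_n(\mathbb{K})$ is cyclic if there is $v\in\mathbb{K}^n$ with $(v,vM^t,\dots,v(M^t)^{n-1})$ a basis of $\mathbb{K}^n$. An $M$-cyclic code is an $\mathbb{L}$-subspace $\mathcal{C}\subseteq\mathbb{L}^n$ with $cM^t\in\mathcal{C}$ for all $c\in\mathcal{C}$, where $M$ is cyclic. *)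

theory Defs
  imports "HOL-Analysis.Analysis" "HOL-Computational_Algebra.Polynomial"
begin

text \<open>Field extension L/K given by a ring embedding e : K -> L; L is a K-vector space
  via the scalar multiplication a . x = e a * x.\<close>

definition scaleK :: "('k::field \<Rightarrow> 'l::field) \<Rightarrow> 'k \<Rightarrow> 'l \<Rightarrow> 'l" where
  "scaleK e a x = e a * x"

definition field_ext :: "('k::field \<Rightarrow> 'l::field) \<Rightarrow> bool" where
  "field_ext e \<longleftrightarrow> (\<forall>a b. e (a + b) = e a + e b) \<and> (\<forall>a b. e (a * b) = e a * e b) \<and> e 1 = 1"

definition finite_degree :: "('k::field \<Rightarrow> 'l::field) \<Rightarrow> bool" where
  "finite_degree e \<longleftrightarrow> (\<exists>B. finite B \<and> module.span (scaleK e) B = UNIV)"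

definition degree_ext :: "('k::field \<Rightarrow> 'l::field) \<Rightarrow> nat" where
  "degree_ext e = vector_space.dim (scaleK e) (UNIV :: 'l set)"

definition wt_R :: "('k::field \<Rightarrow> 'l::field) \<Rightarrow> 'l ^ 'n \<Rightarrow> nat" where
  "wt_R e c = vector_space.dim (scaleK e) (module.span (scaleK e) (range (\<lambda>i. c $ i)))"

definition M1 :: "('k::field \<Rightarrow> 'l::field) \<Rightarrow> ('l ^ 'n) set \<Rightarrow> nat" where
  "M1 e C = Min {wt_R e c | c. c \<in> C \<and> c \<noteq> 0}"

definition linear_code :: "('l::field ^ 'n) set \<Rightarrow> bool" where
  "linear_code C \<longleftrightarrow> 0 \<in> C \<and> (\<forall>x\<in>C. \<forall>y\<in>C. x + y \<in> C) \<and> (\<forall>a. \<forall>x\<in>C. a *s x \<in> C)"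

definition matpow :: "'a::semiring_1 ^ 'n ^ 'n \<Rightarrow> nat \<Rightarrow> 'a ^ 'n ^ 'n" where
  "matpow M k = ((\<lambda>A. M ** A) ^^ k) (mat 1)"

text \<open>Cyclic matrix: some v such that (v, v M^t, ..., v (M^t)^(n-1)) is a basis of K^n.
  For a row vector v, v (M^t)^k is the (column) vector M^k v.\<close>
definition cyclic_matrix :: "'k::field ^ 'n ^ 'n \<Rightarrow> bool" where
  "cyclic_matrix M \<longleftrightarrow> (\<exists>v :: 'k ^ 'n.
     inj_on (\<lambda>k. matpow M k *v v) {..<CARD('n)} \<and>
     vec.independent ((\<lambda>k. matpow M k *v v) ` {..<CARD('n)}) \<and>
     vec.span ((\<lambda>k. matpow M k *v v) ` {..<CARD('n)}) = UNIV)"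

definition poly_mat :: "'a::comm_ring_1 poly \<Rightarrow> 'a ^ 'n ^ 'n \<Rightarrow> 'a ^ 'n ^ 'n" where
  "poly_mat p M = (\<chi> i j. \<Sum>k\<le>degree p. coeff p k * (matpow M k $ i $ j))"

definition is_min_poly :: "'k::field ^ 'n ^ 'n \<Rightarrow> 'k poly \<Rightarrow> bool" where
  "is_min_poly M f \<longleftrightarrow> lead_coeff f = 1 \<and> poly_mat f M = 0 \<and>
     (\<forall>g. poly_mat g M = 0 \<longrightarrow> f dvd g)"

text \<open>c M^t for a row vector c in L^n and M with entries in K (embedded via e).\<close>
definition apply_Mt :: "('k::field \<Rightarrow> 'l::field) \<Rightarrow> 'k ^ 'n ^ 'n \<Rightarrow> 'l ^ 'n \<Rightarrow> 'l ^ 'n" where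
  "apply_Mt e M c = (\<chi> i. \<Sum>j\<in>UNIV. e (M $ i $ j) * c $ j)"

text \<open>M-cyclic code (M is assumed cyclic separately).\<close>
definition M_cyclic_code :: "('k::field \<Rightarrow> 'l::field) \<Rightarrow> 'k ^ 'n ^ 'n \<Rightarrow> ('l ^ 'n) set \<Rightarrow> bool" where
  "M_cyclic_code e M C \<longleftrightarrow> linear_code C \<and> (\<forall>c\<in>C. apply_Mt e M c \<in> C)"

end

theory Submission imports Defs "HOL-Computational_Algebra.Polynomial_Factorial" "HOL-Computational_Algebra.Euclidean_Algorithm" begin

definition pev :: "('a::field^'n \<Rightarrow> 'a^'n) \<Rightarrow> 'a poly \<Rightarrow> 'a^'n \<Rightarrow> 'a^'n" where
  "pev T p x = (\<Sum>k\<le>degree p. coeff p k *s (T^^k) x)"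


lemma poly_bezout:
  fixes a b :: "'a::field poly"
  shows "\<exists>g x y. g = x * a + y * b \<and> g dvd a \<and> g dvd b"
proof (cases "a = 0 \<and> b = 0")
  case True
  then show ?thesis by (intro exI[of _ 0]) auto
next
  case False
  define S where "S = {h. h \<noteq> 0 \<and> (\<exists>x y. h = x * a + y * b)}"
  have "a = 1 * a + 0 * b" "b = 0 * a + 1 * b" by simp_all
  then have "a \<in> S \<or> b \<in> S" using False unfolding S_def by blast
  then obtain h0 where "h0 \<in> S" by blast
  then obtain g where g: "g \<in> S" and gmin: "\<And>h. h \<in> S \<Longrightarrow> degree g \<le> degree h"
    using ex_has_least_nat[of "\<lambda>h. h \<in> S" h0 degree] by blast
  from g obtain x y where gxy: "g = x * a + y * b" and "g \<noteq> 0" unfolding S_def by blast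
  have dv: "g dvd z" if "z = x' * a + y' * b" for z x' y'
  proof -
    define r where "r = z mod g"
    have "r = z - (z div g) * g" unfolding r_def by (simp add: minus_div_mult_eq_mod)
    also have "\<dots> = (x' - (z div g) * x) * a + (y' - (z div g) * y) * b"
      unfolding that gxy by (simp add: algebra_simps)
    finally have r: "r = (x' - (z div g) * x) * a + (y' - (z div g) * y) * b" .
    have "r = 0"
    proof (rule ccontr)
      assume "r \<noteq> 0"
      then have "r \<in> S" using r unfolding S_def by blast
      then have "degree g \<le> degree r" by (rule gmin)
      moreover have "degree r < degree g" using \<open>r \<noteq> 0\<close> \<open>g \<noteq> 0\<close> degree_mod_less' unfolding r_def
        by blast
      ultimately show False by simp
    qed
    then show ?thesis by (simp add: r_def mod_eq_0_iff_dvd)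
  qed
  have "g dvd a" by (rule dv[of a 1 0]) simp
  moreover have "g dvd b" by (rule dv[of b 0 1]) simp
  ultimately show ?thesis using gxy by blast
qed

lemma irr_prime:
  fixes P :: "'a::field poly"
  assumes irrP: "irreducible P" and d: "P dvd a * b"
  shows "P dvd a \<or> P dvd b"
proof -
  obtain g x y where g: "g = x * P + y * a" "g dvd P" "g dvd a" using poly_bezout[of P a] by blast
  from irreducibleD'[OF irrP g(2)] have "P dvd g \<or> is_unit g" .
  then show ?thesis
  proof
    assume "P dvd g" then show ?thesis using g(3) dvd_trans by blast
  next
    assume "is_unit g"
    then obtain k where k: "1 = g * k" by (elim dvdE)
    have "b = P * (x * b * k) + (a * b) * (y * k)"
      using arg_cong[OF k, of "\<lambda>z. b * z"] unfolding g(1) by (simp add: algebra_simps)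
    moreover have "P dvd P * (x * b * k) + (a * b) * (y * k)"
      using d by (intro dvd_add) auto
    ultimately show ?thesis by simp
  qed
qed

lemma irr_dvd_pow:
  fixes P :: "'a::field poly"
  assumes "irreducible P" "P dvd g ^ k" shows "P dvd g"
  using assms(2)
proof (induction k)
  case 0 then show ?case using assms(1) by (simp add: irreducible_def)
next
  case (Suc k)
  then show ?case using irr_prime[OF assms(1), of g "g ^ k"] by auto
qed

lemma irr_dvd_prod:
  fixes P :: "'a::field poly" and s :: nat
  assumes "irreducible P" "P dvd (\<Prod>i<s. g i ^ m i)"
  shows "\<exists>j<s. P dvd g j"
  using assms(2)
proof (induction s)
  case 0 then show ?case using assms(1) by (simp add: irreducible_def)
next
  case (Suc s)
  have "P dvd (\<Prod>i<s. g i ^ m i) \<or> P dvd g s ^ m s"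
    using irr_prime[OF assms(1)] Suc.prems by (simp add: prod.lessThan_Suc)
  then show ?case
  proof
    assume "P dvd (\<Prod>i<s. g i ^ m i)"
    then show ?thesis using Suc.IH less_Suc_eq by blast
  next
    assume "P dvd g s ^ m s"
    then show ?thesis using irr_dvd_pow[OF assms(1)] by blast
  qed
qed

lemma irr_factor_exists:
  fixes t :: "'a::field poly"
  assumes "t \<noteq> 0" "\<not> is_unit t"
  shows "\<exists>P. irreducible P \<and> P dvd t"
  using assms
proof (induction "degree t" arbitrary: t rule: less_induct)
  case less
  show ?case
  proof (cases "irreducible t")
    case True then show ?thesis by (intro exI[of _ t]) simp
  next
    case False
    then obtain a b where ab: "t = a * b" "\<not> is_unit a" "\<not> is_unit b"
      using less.prems by (auto simp: irreducible_def)
    have "a \<noteq> 0" "b \<noteq> 0" using ab less.prems by auto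
    have "degree b \<noteq> 0" using \<open>b \<noteq> 0\<close> ab(3) by (simp add: is_unit_iff_degree)
    then have "degree a < degree t" using ab \<open>a \<noteq> 0\<close> \<open>b \<noteq> 0\<close> by (simp add: degree_mult_eq)
    from less.hyps[OF this \<open>a \<noteq> 0\<close> ab(2)] obtain P where "irreducible P" "P dvd a" by blast
    then show ?thesis using ab(1) by (auto intro: dvd_mult2)
  qed
qed

lemma irr_prod_factor:
  fixes g :: "nat \<Rightarrow> 'a::field poly" and s :: nat
  assumes "\<forall>i<s. irreducible (g i)" "t dvd (\<Prod>i<s. g i ^ m i)" "t \<noteq> 0" "\<not> is_unit t"
  shows "\<exists>j<s. g j dvd t"
proof -
  obtain P where P: "irreducible P" "P dvd t" using irr_factor_exists[OF assms(3,4)] by blast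
  have "P dvd (\<Prod>i<s. g i ^ m i)" using P(2) assms(2) by (rule dvd_trans)
  then obtain j where j: "j < s" "P dvd g j" using irr_dvd_prod[OF P(1)] by blast
  have "irreducible (g j)" using assms(1) j(1) by blast
  then have "g j dvd P \<or> is_unit P" using j(2) by (rule irreducibleD')
  then have "g j dvd P" using P(1) by (auto simp: irreducible_def)
  then have "g j dvd t" using P(2) by (rule dvd_trans)
  then show ?thesis using j(1) by blast
qed

lemma monic_assoc:
  fixes p q :: "'a::field poly"
  assumes "p dvd q" "q dvd p" "lead_coeff p = 1" "lead_coeff q = 1"
  shows "p = q"
proof -
  obtain k where k: "q = p * k" using assms(1) by (elim dvdE)
  have "q \<noteq> 0" "p \<noteq> 0" using assms(3,4) by auto
  then have "k \<noteq> 0" using k by auto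
  have "degree q \<le> degree p" using dvd_imp_degree_le[OF assms(2) \<open>p \<noteq> 0\<close>] .
  moreover have "degree q = degree p + degree k" using k \<open>p \<noteq> 0\<close> \<open>k \<noteq> 0\<close> by (simp add: degree_mult_eq)
  ultimately have dk: "degree k = 0" by simp
  have "lead_coeff q = lead_coeff p * lead_coeff k" using k by (simp add: lead_coeff_mult)
  then have "lead_coeff k = 1" using assms by simp
  with dk have "coeff k 0 = 1" by simp
  then have "k = 1" using dk by (metis degree_0_id one_pCons)
  then show ?thesis using k by simp
qed

locale linop =
  fixes T :: "'a::field^'n \<Rightarrow> 'a^'n"
  assumes T_add: "\<And>x y. T (x + y) = T x + T y" and T_scale: "\<And>c x. T (c *s x) = c *s T x"
begin

lemma T_0[simp]: "T 0 = 0"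
  using T_scale[of 0 0] by simp

lemma Tk_add: "(T^^k) (x + y) = (T^^k) x + (T^^k) y"
  by (induction k) (simp_all add: T_add)

lemma Tk_scale: "(T^^k) (c *s x) = c *s (T^^k) x"
  by (induction k) (simp_all add: T_scale)

lemma Tk_0[simp]: "(T^^k) 0 = 0"
  by (induction k) simp_all

lemma T_sum: "T (sum f A) = (\<Sum>i\<in>A. T (f i))"
  by (induction A rule: infinite_finite_induct) (simp_all add: T_add)

lemma Tk_sum: "(T^^k) (sum f A) = (\<Sum>i\<in>A. (T^^k) (f i))"
  by (induction A rule: infinite_finite_induct) (simp_all add: Tk_add)

lemma Tk_T: "(T^^k) (T x) = T ((T^^k) x)"
  by (induction k) simp_all

lemma pev_bound: "degree p \<le> N \<Longrightarrow> pev T p x = (\<Sum>k\<le>N. coeff p k *s (T^^k) x)"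
  unfolding pev_def by (rule sum.mono_neutral_left) (auto simp: coeff_eq_0)

lemma pev_0[simp]: "pev T 0 x = 0"
  by (simp add: pev_def)

lemma pev_add: "pev T (p + q) x = pev T p x + pev T q x"
proof -
  let ?N = "max (degree p) (degree q)"
  have "degree (p + q) \<le> ?N" by (rule degree_add_le_max)
  then show ?thesis
    by (simp add: pev_bound[of _ ?N] vector_sadd_rdistrib sum.distrib)
qed

lemma pev_smult: "pev T (smult a p) x = a *s pev T p x"
proof -
  have "degree (smult a p) \<le> degree p" by (rule degree_smult_le)
  then show ?thesis
    by (simp add: pev_bound[of _ "degree p"] vec.scale_sum_right)
qed

lemma pev_pCons: "pev T (pCons a p) x = a *s x + T (pev T p x)"
proof -
  have "degree (pCons a p) \<le> Suc (degree p)" by (rule degree_pCons_le)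
  then have "pev T (pCons a p) x = (\<Sum>k\<le>Suc (degree p). coeff (pCons a p) k *s (T^^k) x)"
    by (rule pev_bound)
  also have "\<dots> = a *s x + (\<Sum>k\<le>degree p. coeff p k *s (T^^Suc k) x)"
    by (subst sum.atMost_Suc_shift) simp
  also have "\<dots> = a *s x + T (pev T p x)"
    by (simp add: pev_def T_sum T_scale)
  finally show ?thesis .
qed

lemma pev_x_add: "pev T p (x + y) = pev T p x + pev T p y"
  by (simp add: pev_def Tk_add vector_sadd_rdistrib vec.scale_right_distrib sum.distrib)

lemma pev_x_scale: "pev T p (c *s x) = c *s pev T p x"
  by (simp add: pev_def Tk_scale vec.scale_sum_right mult.commute)

lemma pev_x_0[simp]: "pev T p 0 = 0"
  by (simp add: pev_def)

lemma pev_T: "pev T p (T x) = T (pev T p x)"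
  by (simp add: pev_def Tk_T T_sum T_scale)

lemma pev_mult: "pev T (p * q) x = pev T p (pev T q x)"
proof (induction p rule: pCons_induct)
  case 0
  then show ?case by simp
next
  case (pCons a p)
  have "pCons a p * q = smult a q + pCons 0 (p * q)" by simp
  then show ?case
    by (simp add: pev_add pev_smult pev_pCons pCons.IH)
qed

lemma pev_one[simp]: "pev T 1 x = x"
  by (simp add: pev_def)

lemma pev_monom: "pev T (monom a k) x = a *s (T^^k) x"
proof -
  have "pev T (monom a k) x = (\<Sum>j\<le>k. coeff (monom a k) j *s (T^^j) x)"
    by (rule pev_bound) (rule degree_monom_le)
  also have "\<dots> = (\<Sum>j\<le>k. if j = k then a *s (T^^j) x else 0)"
    by (rule sum.cong) (auto simp: coeff_monom)
  finally show ?thesis by simp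
qed

lemma pev_sum_poly: "pev T (sum P A) x = (\<Sum>i\<in>A. pev T (P i) x)"
  by (induction A rule: infinite_finite_induct) (simp_all add: pev_add)

lemma pev_comm: "pev T p (pev T q x) = pev T q (pev T p x)"
  by (metis pev_mult mult.commute)

lemma pev_diff: "pev T (p - q) x = pev T p x - pev T q x"
  using pev_add[of "p - q" q x] by (simp add: algebra_simps)

lemma pev_closed:
  assumes "0 \<in> C" "\<And>x y. x \<in> C \<Longrightarrow> y \<in> C \<Longrightarrow> x + y \<in> C" "\<And>a x. x \<in> C \<Longrightarrow> a *s x \<in> C"
    "\<And>x. x \<in> C \<Longrightarrow> T x \<in> C" "x \<in> C"
  shows "pev T p x \<in> C"
proof (induction p rule: pCons_induct)
  case 0 then show ?case using assms by simp
next
  case (pCons a p) then show ?case using assms by (simp add: pev_pCons)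
qed

lemma span_pev:
  assumes n: "n > 0" and inj: "inj_on (\<lambda>k. (T^^k) v) {..<n}"
    and x: "x \<in> vec.span ((\<lambda>k. (T^^k) v) ` {..<n})"
  shows "\<exists>q. degree q < n \<and> x = pev T q v"
proof -
  obtain u where u: "x = (\<Sum>w\<in>(\<lambda>k. (T^^k) v) ` {..<n}. u w *s w)"
    using x vec.span_finite[of "(\<lambda>k. (T^^k) v) ` {..<n}"] by auto
  also have "\<dots> = (\<Sum>k<n. u ((T^^k) v) *s (T^^k) v)"
    by (subst sum.reindex[OF inj]) simp
  finally have x2: "x = (\<Sum>k<n. u ((T^^k) v) *s (T^^k) v)" .
  define q where "q = (\<Sum>k<n. monom (u ((T^^k) v)) k)"
  have "\<forall>i>n - 1. coeff q i = 0"
    using n by (auto simp: q_def coeff_sum coeff_monom)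
  then have "degree q \<le> n - 1" by (rule degree_le)
  with n have "degree q < n" by simp
  moreover have "pev T q v = x"
    by (simp add: q_def pev_sum_poly pev_monom x2)
  ultimately show ?thesis by auto
qed

lemma pev_zero_all:
  assumes gen: "\<And>x. \<exists>q. x = pev T q v" and g: "pev T g v = 0"
  shows "pev T g x = 0"
proof -
  obtain q where "x = pev T q v" using gen by blast
  then show ?thesis using g by (simp add: pev_comm[of g q])
qed

end



definition mapv :: "('k::field \<Rightarrow> 'l::field) \<Rightarrow> 'k^'n \<Rightarrow> 'l^'n" where
  "mapv e u = (\<chi> i. e (u $ i))"

locale fext =
  fixes e :: "'k::field \<Rightarrow> 'l::field"
  assumes ext: "field_ext e"
begin

lemma e_add: "e (a + b) = e a + e b" using ext by (simp add: field_ext_def)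
lemma e_mult: "e (a * b) = e a * e b" using ext by (simp add: field_ext_def)
lemma e_1[simp]: "e 1 = 1" using ext by (simp add: field_ext_def)
lemma e_0[simp]: "e 0 = 0" using e_add[of 0 0] by (metis add.right_neutral add_left_cancel)
lemma e_uminus: "e (- a) = - e a" using e_add[of a "-a"] by (metis e_0 neg_eq_iff_add_eq_0 add.right_inverse)
lemma e_diff: "e (a - b) = e a - e b" using e_add[of a "-b"] by (simp add: e_uminus)
lemma e_sum: "e (sum f A) = (\<Sum>i\<in>A. e (f i))"
  by (induction A rule: infinite_finite_induct) (simp_all add: e_add)
lemma e_eq0_iff[simp]: "e a = 0 \<longleftrightarrow> a = 0"
proof
  assume "e a = 0"
  show "a = 0"
  proof (rule ccontr)
    assume "a \<noteq> 0"
    then have "e a * e (inverse a) = 1" by (simp flip: e_mult)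
    with \<open>e a = 0\<close> show False by simp
  qed
qed simp
lemma e_inj: "e a = e b \<longleftrightarrow> a = b"
  using e_eq0_iff[of "a - b"] by (auto simp: e_diff)

lemma mp_coeff: "coeff (map_poly e p) n = e (coeff p n)"
  by (simp add: coeff_map_poly)
lemma mp_add: "map_poly e (p + q) = map_poly e p + map_poly e q"
  by (rule poly_eqI) (simp add: mp_coeff e_add)
lemma mp_smult: "map_poly e (smult a p) = smult (e a) (map_poly e p)"
  by (rule map_poly_smult) (simp_all add: e_mult)
lemma mp_mult: "map_poly e (p * q) = map_poly e p * map_poly e q"
proof (induction p rule: pCons_induct)
  case 0 then show ?case by simp
next
  case (pCons a p)
  have "pCons a p * q = smult a q + pCons 0 (p * q)" by simp
  then show ?case by (simp add: mp_add mp_smult map_poly_pCons pCons.IH)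
qed
lemma mp_1[simp]: "map_poly e 1 = 1"
  by (simp add: one_pCons map_poly_pCons)
lemma mp_prod: "map_poly e (prod P A) = (\<Prod>i\<in>A. map_poly e (P i))"
  by (induction A rule: infinite_finite_induct) (simp_all add: mp_mult)
lemma mp_power: "map_poly e (p ^ k) = map_poly e p ^ k"
  by (induction k) (simp_all add: mp_mult)
lemma mp_degree[simp]: "degree (map_poly e p) = degree p"
  by (rule degree_map_poly) simp
lemma mp_eq0_iff[simp]: "map_poly e p = 0 \<longleftrightarrow> p = 0"
  by (metis e_0 e_eq0_iff leading_coeff_0_iff mp_coeff mp_degree)
lemma mp_lead: "lead_coeff (map_poly e p) = e (lead_coeff p)"
  by (simp add: mp_coeff)
lemma mp_dvd: "p dvd q \<Longrightarrow> map_poly e p dvd map_poly e q"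
  by (auto simp: mp_mult elim!: dvdE)
lemma mp_unit_iff: "is_unit (map_poly e p) \<longleftrightarrow> is_unit p"
  by (cases "p = 0") (simp_all add: is_unit_iff_degree)

lemma mapv_add: "mapv e (u + w) = mapv e u + mapv e w"
  by (simp add: mapv_def vec_eq_iff e_add)
lemma mapv_scale: "mapv e (a *s u) = e a *s mapv e u"
  by (simp add: mapv_def vec_eq_iff e_mult)
lemma mapv_0[simp]: "mapv e 0 = 0"
  by (simp add: mapv_def vec_eq_iff)
lemma mapv_eq0_iff[simp]: "mapv e u = 0 \<longleftrightarrow> u = 0"
  by (simp add: mapv_def vec_eq_iff)
lemma mapv_inj: "mapv e u = mapv e w \<longleftrightarrow> u = w"
  by (simp add: mapv_def vec_eq_iff e_inj)
lemma mapv_sum: "mapv e (sum f A) = (\<Sum>i\<in>A. mapv e (f i))"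
  by (induction A rule: infinite_finite_induct) (simp_all add: mapv_add)
lemma mapv_axis: "mapv e (axis i 1) = axis i 1"
  by (simp add: mapv_def vec_eq_iff axis_def)

lemma TL_mapv: "apply_Mt e M (mapv e u) = mapv e (M *v u)"
  by (simp add: apply_Mt_def mapv_def vec_eq_iff matrix_vector_mult_def e_sum e_mult)

lemma linop_TL: "linop (apply_Mt e M)"
  by unfold_locales (simp_all add: apply_Mt_def vec_eq_iff algebra_simps sum.distrib sum_distrib_left)

lemma linop_TK: "linop ((*v) (M :: 'k^'n^'n))"
  by unfold_locales (simp_all add: matrix_vector_mult_def vec_eq_iff algebra_simps sum.distrib sum_distrib_left)

lemma pev_transfer:
  "pev (apply_Mt e M) (map_poly e p) (mapv e u) = mapv e (pev ((*v) M) p u)"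
proof (induction p rule: pCons_induct)
  case 0 then show ?case by (simp add: linop.pev_0[OF linop_TL] linop.pev_0[OF linop_TK])
next
  case (pCons a p)
  show ?case
    by (simp add: map_poly_pCons linop.pev_pCons[OF linop_TL] linop.pev_pCons[OF linop_TK]
        pCons.IH TL_mapv mapv_add mapv_scale)
qed

sublocale Kvs: vector_space "scaleK e"
  by unfold_locales (simp_all add: scaleK_def e_add e_mult algebra_simps)

lemma wt_eq: "wt_R e c = Kvs.dim (range (\<lambda>i. c $ i))"
  by (simp add: wt_R_def)

lemma wt_pos:
  assumes "c \<noteq> 0" shows "wt_R e c \<ge> 1"
proof -
  let ?S = "range (\<lambda>i. c $ i)"
  obtain i where i: "c $ i \<noteq> 0" using assms by (auto simp: vec_eq_iff)
  obtain B where B: "B \<subseteq> Kvs.span ?S" "Kvs.independent B" "Kvs.span ?S \<subseteq> Kvs.span B"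
    "card B = Kvs.dim (Kvs.span ?S)"
    by (rule Kvs.basis_exists)
  have "finite B" using Kvs.independent_span_bound[of ?S B] B by auto
  show ?thesis
  proof (rule ccontr)
    assume "\<not> ?thesis"
    then have "Kvs.dim (Kvs.span ?S) = 0" by (simp add: wt_eq)
    with B \<open>finite B\<close> have "B = {}" by simp
    moreover have "c $ i \<in> Kvs.span ?S" by (rule Kvs.span_base) auto
    ultimately show False using B i by auto
  qed
qed

lemma wt_le: "wt_R e (c :: 'l^'n) \<le> CARD('n)"
proof -
  have "wt_R e c \<le> card (range (\<lambda>i. c $ i))"
    unfolding wt_eq by (rule Kvs.dim_le_card') simp
  also have "\<dots> \<le> CARD('n)" by (rule card_image_le) simp
  finally show ?thesis .
qed

lemma wt_mapv:
  assumes "u \<noteq> 0" shows "wt_R e (mapv e u) = 1"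
proof -
  have "range (\<lambda>i. mapv e u $ i) \<subseteq> Kvs.span {1}"
  proof
    fix x assume "x \<in> range (\<lambda>i. mapv e u $ i)"
    then obtain i where "x = e (u $ i)" by (auto simp: mapv_def)
    then have "x = scaleK e (u $ i) 1" by (simp add: scaleK_def)
    then show "x \<in> Kvs.span {1}" by (simp add: Kvs.span_scale Kvs.span_base)
  qed
  then have "wt_R e (mapv e u) \<le> 1"
    unfolding wt_eq using Kvs.dim_le_card[of _ "{1}"] by fastforce
  moreover have "wt_R e (mapv e u) \<ge> 1" using assms by (intro wt_pos) simp
  ultimately show ?thesis by simp
qed

lemma wt_one:
  assumes "wt_R e c = 1"
  shows "\<exists>l u. l \<noteq> 0 \<and> c = l *s mapv e u"
proof -
  let ?S = "range (\<lambda>i. c $ i)"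
  obtain B where B: "B \<subseteq> Kvs.span ?S" "Kvs.independent B" "Kvs.span ?S \<subseteq> Kvs.span B"
    "card B = Kvs.dim (Kvs.span ?S)"
    by (rule Kvs.basis_exists)
  with assms have "card B = 1" by (simp add: wt_eq)
  then obtain l where l: "B = {l}" by (auto simp: card_1_singleton_iff)
  with B have "l \<noteq> 0" using Kvs.dependent_zero by auto
  have "\<forall>i. \<exists>a. c $ i = e a * l"
  proof
    fix i
    have "c $ i \<in> Kvs.span ?S" by (rule Kvs.span_base) auto
    with B l have "c $ i \<in> Kvs.span {l}" by auto
    then show "\<exists>a. c $ i = e a * l" by (auto simp: Kvs.span_singleton scaleK_def)
  qed
  then obtain a where a: "\<And>i. c $ i = e (a i) * l" by metis
  have "c = l *s mapv e (\<chi> i. a i)"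
    by (simp add: vec_eq_iff mapv_def a mult.commute)
  with \<open>l \<noteq> 0\<close> show ?thesis by blast
qed

end


locale cset = fext e for e :: "'k::field \<Rightarrow> 'l::field" +
  fixes M :: "'k^'n^'n" and fs :: "nat \<Rightarrow> 'k poly" and ms :: "nat \<Rightarrow> nat" and s :: nat
  assumes cyc: "cyclic_matrix M"
    and minp: "is_min_poly M (\<Prod>i<s. fs i ^ ms i)"
    and monic: "\<forall>i<s. lead_coeff (fs i) = 1"
    and irr: "\<forall>i<s. irreducible (fs i)"
    and dist: "inj_on fs {..<s}"
    and mpos: "\<forall>i<s. ms i \<ge> 1"
begin

sublocale K: linop "(*v) M" by (rule linop_TK)
sublocale L: linop "apply_Mt e M" by (rule linop_TL)

abbreviation "TK \<equiv> (*v) M"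
abbreviation "TL \<equiv> apply_Mt e M"

definition f where "f = (\<Prod>i<s. fs i ^ ms i)"
abbreviation "F \<equiv> map_poly e f"

lemma matpow_mult: "matpow M k *v u = (TK^^k) u"
proof (induction k arbitrary: u)
  case 0 then show ?case by (simp add: matpow_def)
next
  case (Suc k)
  have "matpow M (Suc k) = M ** matpow M k" by (simp add: matpow_def)
  then show ?case by (simp flip: matrix_vector_mul_assoc add: Suc.IH)
qed

lemma poly_mat_mult: "poly_mat p M *v u = pev TK p u"
proof -
  have "(poly_mat p M *v u) $ i = pev TK p u $ i" for i
  proof -
    have "(poly_mat p M *v u) $ i = (\<Sum>j\<in>UNIV. (\<Sum>k\<le>degree p. coeff p k * (matpow M k $ i $ j)) * u $ j)"
      by (simp add: poly_mat_def matrix_vector_mult_def)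
    also have "\<dots> = (\<Sum>k\<le>degree p. coeff p k * (\<Sum>j\<in>UNIV. matpow M k $ i $ j * u $ j))"
      unfolding sum_distrib_right sum_distrib_left mult.assoc by (rule sum.swap)
    also have "\<dots> = (\<Sum>k\<le>degree p. coeff p k * ((matpow M k *v u) $ i))"
      by (simp add: matrix_vector_mult_def)
    also have "\<dots> = pev TK p u $ i"
      by (simp add: pev_def matpow_mult)
    finally show ?thesis .
  qed
  then show ?thesis by (simp add: vec_eq_iff)
qed

lemma f_kills: "pev TK f u = 0"
  using minp by (metis f_def is_min_poly_def matrix_vector_mult_0 poly_mat_mult)

lemma f_min: "(\<And>u. pev TK g u = 0) \<Longrightarrow> f dvd g"
  using minp unfolding is_min_poly_def f_def
  by (metis matrix_eq matrix_vector_mult_0 poly_mat_mult)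

lemma f_monic: "lead_coeff f = 1"
  using minp by (simp add: is_min_poly_def f_def)

lemma f_nz: "f \<noteq> 0"
  using f_monic by auto

lemma F_nz: "F \<noteq> 0"
  using f_nz by simp

definition v0 where "v0 = (SOME v. inj_on (\<lambda>k. matpow M k *v v) {..<CARD('n)} \<and>
     vec.independent ((\<lambda>k. matpow M k *v v) ` {..<CARD('n)}) \<and>
     vec.span ((\<lambda>k. matpow M k *v v) ` {..<CARD('n)}) = UNIV)"

lemma v0_props: "inj_on (\<lambda>k. (TK^^k) v0) {..<CARD('n)}" "vec.span ((\<lambda>k. (TK^^k) v0) ` {..<CARD('n)}) = UNIV"
proof -
  have "\<exists>v. inj_on (\<lambda>k. matpow M k *v v) {..<CARD('n)} \<and>
     vec.independent ((\<lambda>k. matpow M k *v v) ` {..<CARD('n)}) \<and>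
     vec.span ((\<lambda>k. matpow M k *v v) ` {..<CARD('n)}) = UNIV"
    using cyc by (simp add: cyclic_matrix_def)
  from someI_ex[OF this] show "inj_on (\<lambda>k. (TK^^k) v0) {..<CARD('n)}" "vec.span ((\<lambda>k. (TK^^k) v0) ` {..<CARD('n)}) = UNIV"
    by (simp_all add: v0_def matpow_mult)
qed

lemma genK: "\<exists>q. degree q < CARD('n) \<and> u = pev TK q v0"
  using K.span_pev[OF _ v0_props(1)] v0_props(2) by simp

lemma deg_f: "degree f \<le> CARD('n)"
proof -
  obtain q where q: "degree q < CARD('n)" "(TK^^CARD('n)) v0 = pev TK q v0" using genK by blast
  define h where "h = monom 1 CARD('n) - q"
  have "pev TK h v0 = (TK^^CARD('n)) v0 - pev TK q v0"
    unfolding h_def K.pev_diff K.pev_monom by simp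
  then have h0: "pev TK h v0 = 0" using q(2) by simp
  have "pev TK h u = 0" for u
  proof -
    obtain r where "degree r < CARD('n)" "u = pev TK r v0" using genK by blast
    then show ?thesis using h0 K.pev_comm[of h r v0] by simp
  qed
  then have "f dvd h" by (rule f_min)
  moreover have "coeff h CARD('n) = 1" using q(1) unfolding h_def coeff_diff coeff_monom
    by (simp add: coeff_eq_0)
  then have "h \<noteq> 0" by auto
  moreover have "degree h \<le> CARD('n)" unfolding h_def
    using q(1) by (intro degree_diff_le) (simp_all add: degree_monom_le)
  ultimately show ?thesis using dvd_imp_degree_le[of f h] by linarith
qed


definition v where "v = mapv e v0"

lemma TLk_mapv: "(TL^^k) (mapv e u) = mapv e ((TK^^k) u)"
  by (induction k) (simp_all add: TL_mapv)

lemma genL: "\<exists>Q. degree Q < CARD('n) \<and> c = pev TL Q v"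
proof -
  have ax: "\<exists>Q. degree Q < CARD('n) \<and> axis i (1::'l) = pev TL Q v" for i
  proof -
    obtain q where q: "degree q < CARD('n)" "axis i 1 = pev TK q v0" using genK by blast
    have "axis i (1::'l) = mapv e (axis i 1)" by (simp add: mapv_axis)
    also have "\<dots> = pev TL (map_poly e q) v" by (simp add: q(2) v_def pev_transfer)
    finally show ?thesis using q(1) by (intro exI[of _ "map_poly e q"]) simp
  qed
  then obtain Q where Q: "\<And>i. degree (Q i) < CARD('n)" "\<And>i. axis i (1::'l) = pev TL (Q i) v" by metis
  define R where "R = (\<Sum>i\<in>UNIV. smult (c $ i) (Q i))"
  have "pev TL R v = (\<Sum>i\<in>UNIV. c $ i *s axis i 1)"
    by (simp add: R_def L.pev_sum_poly L.pev_smult Q(2))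
  also have "\<dots> = c" by (rule basis_expansion)
  finally have "c = pev TL R v" ..
  moreover have "degree R < CARD('n)" unfolding R_def
    by (rule degree_sum_less) (use Q(1) in \<open>auto intro: le_less_trans[OF degree_smult_le]\<close>)
  ultimately show ?thesis by blast
qed

definition SL where "SL = (\<lambda>k. (TL^^k) v) ` {..<CARD('n)}"

lemma SL_inj: "inj_on (\<lambda>k. (TL^^k) v) {..<CARD('n)}"
  using v0_props(1) by (simp add: inj_on_def v_def TLk_mapv mapv_inj)

lemma pev_small:
  assumes "degree Q < CARD('n)"
  shows "pev TL Q v = (\<Sum>k<CARD('n). coeff Q k *s (TL^^k) v)"
proof -
  have "pev TL Q v = (\<Sum>k\<le>CARD('n) - 1. coeff Q k *s (TL^^k) v)"
    using assms by (intro L.pev_bound) simp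
  also have "{..CARD('n) - 1} = {..<CARD('n)}"
  proof -
    have c: "0 < CARD('n)" by simp
    show ?thesis using c by (intro set_eqI) (simp only: atMost_iff lessThan_iff; linarith)
  qed
  finally show ?thesis .
qed

lemma SL_span: "vec.span SL = UNIV"
proof -
  have "c \<in> vec.span SL" for c
  proof -
    obtain Q where Q: "degree Q < CARD('n)" "c = pev TL Q v" using genL by blast
    then have "c = (\<Sum>k<CARD('n). coeff Q k *s (TL^^k) v)" by (simp add: pev_small)
    also have "\<dots> \<in> vec.span SL"
      by (intro vec.span_sum vec.span_scale vec.span_base) (auto simp: SL_def)
    finally show ?thesis .
  qed
  then show ?thesis by auto
qed

lemma SL_indep: "vec.independent SL"
proof (rule vec.card_le_dim_spanning[of SL UNIV])
  show "finite SL" by (simp add: SL_def)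
  have "card SL = CARD('n)" unfolding SL_def by (subst card_image[OF SL_inj]) simp
  then show "card SL \<le> vec.dim (UNIV :: ('l^'n) set)" by (simp add: vec.dim_UNIV card_cart_basis)
qed (simp_all add: SL_span)

lemma coeff_zero:
  assumes "(\<Sum>k<CARD('n). a k *s (TL^^k) v) = 0" "k < CARD('n)"
  shows "a k = 0"
proof -
  define c where "c w = a (the_inv_into {..<CARD('n)} (\<lambda>k. (TL^^k) v) w)" for w
  have "(\<Sum>w\<in>SL. c w *s w) = (\<Sum>k<CARD('n). c ((TL^^k) v) *s (TL^^k) v)"
    unfolding SL_def by (rule sum.reindex[OF SL_inj, unfolded comp_def])
  also have "\<dots> = (\<Sum>k<CARD('n). a k *s (TL^^k) v)"
    by (rule sum.cong) (simp_all add: c_def the_inv_into_f_f[OF SL_inj])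
  finally have "(\<Sum>w\<in>SL. c w *s w) = 0" using assms(1) by simp
  then have "c ((TL^^k) v) = 0"
    using SL_indep assms(2) unfolding vec.independent_explicit by (auto simp: SL_def)
  then show ?thesis using assms(2) by (simp add: c_def the_inv_into_f_f[OF SL_inj])
qed

lemma Fv: "pev TL F v = 0"
  by (simp add: v_def pev_transfer f_kills)

lemma F_kills: "pev TL F c = 0"
proof -
  obtain Q where "c = pev TL Q v" using genL by blast
  then show ?thesis using Fv L.pev_comm[of F Q v] by simp
qed

lemma FactA:
  assumes p: "pev TL p v = 0" shows "F dvd p"
proof -
  define r where "r = p mod F"
  have "p = p div F * F + r" by (metis r_def div_mult_mod_eq)
  then have "pev TL p v = pev TL (p div F) (pev TL F v) + pev TL r v" by (metis L.pev_add L.pev_mult)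
  then have rv: "pev TL r v = 0" using p Fv by simp
  have "r = 0"
  proof (rule ccontr)
    assume "r \<noteq> 0"
    then have "degree r < degree F" using F_nz r_def degree_mod_less' by blast
    hence dr: "degree r < CARD('n)" using deg_f by simp
    have "\<forall>k<CARD('n). coeff r k = 0" using rv pev_small[OF dr] coeff_zero by metis
    moreover have "\<forall>k\<ge>CARD('n). coeff r k = 0" using dr by (simp add: coeff_eq_0)
    ultimately have "r = 0" by (metis leI poly_eqI coeff_0)
    with \<open>r \<noteq> 0\<close> show False ..
  qed
  then show "F dvd p" by (simp add: r_def mod_eq_0_iff_dvd)
qed

lemma fs_dvd_f: "i < s \<Longrightarrow> fs i dvd f"
  unfolding f_def using mpos
  by (metis (no_types, lifting) dvd_power dvd_prodI dvd_trans finite_lessThan lessThan_iff less_le_trans zero_less_one)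

lemma fs_nz: "i < s \<Longrightarrow> fs i \<noteq> 0" using irr by (auto simp: irreducible_def)
lemma fs_nonunit: "i < s \<Longrightarrow> \<not> is_unit (fs i)" using irr by (auto simp: irreducible_def)

lemma F_prod: "F = (\<Prod>i<s. map_poly e (fs i) ^ ms i)"
  by (simp add: f_def mp_prod mp_power)

lemma F_split: "i < s \<Longrightarrow> F = map_poly e (fs i) * map_poly e (f div fs i)"
  by (metis fs_dvd_f dvd_mult_div_cancel mp_mult)


lemma closed_pev:
  assumes "M_cyclic_code e M C" "x \<in> C" shows "pev TL p x \<in> C"
  using assms unfolding M_cyclic_code_def linear_code_def
  by (intro L.pev_closed) auto

lemma M1_eq1:
  fixes C :: "('l^'n) set"
  assumes "w \<in> C" "w \<noteq> 0" "wt_R e w = 1"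
  shows "M1 e C = 1"
proof -
  let ?S = "{wt_R e c | c. c \<in> C \<and> c \<noteq> 0}"
  have "?S \<subseteq> {..CARD('n)}"
  proof
    fix x assume "x \<in> ?S"
    then obtain c :: "'l^'n" where "x = wt_R e c" by blast
    then show "x \<in> {..CARD('n)}" using wt_le[of c] by simp
  qed
  then have "finite ?S" by (rule finite_subset) simp
  moreover have "1 \<in> ?S" using assms by (metis (mono_tags, lifting) mem_Collect_eq)
  moreover have "\<And>y. y \<in> ?S \<Longrightarrow> 1 \<le> y" using wt_pos by blast
  ultimately show ?thesis unfolding M1_def by (intro Min_eqI) auto
qed

lemma dir2:
  assumes irrL: "\<forall>i<s. irreducible (map_poly e (fs i))"
    and C: "M_cyclic_code e M C" "C \<noteq> {0}"
  shows "M1 e C = 1"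
proof -
  have "0 \<in> C" using C(1) by (simp add: M_cyclic_code_def linear_code_def)
  then obtain c where c: "c \<in> C" "c \<noteq> 0" using C(2) by blast
  obtain q where q: "c = pev TL q v" using genL by blast
  obtain d a b where bez0: "d = a * q + b * F" "d dvd q" "d dvd F" using poly_bezout[of q F] by blast
  have bez: "a * q + b * F = d" using bez0(1) by simp
  have "pev TL d v = pev TL a c"
    unfolding bez[symmetric] by (simp add: L.pev_add L.pev_mult Fv q)
  then have dC: "pev TL d v \<in> C" using closed_pev[OF C(1) c(1)] by simp
  have ndvd: "\<not> F dvd d"
  proof
    assume "F dvd d"
    then have "F dvd q" using bez0(2) by (metis dvd_trans)
    then obtain k where "q = F * k" by (elim dvdE)
    then have "c = 0" using q by (simp add: L.pev_mult F_kills)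
    with c show False by simp
  qed
  obtain t where Fdt: "F = d * t" using bez0(3) by (elim dvdE)
  have "t \<noteq> 0" using Fdt F_nz by auto
  moreover have "\<not> is_unit t"
  proof
    assume "is_unit t"
    then have "F dvd d" using Fdt by (metis dvd_mult_unit_iff dvd_refl)
    with ndvd show False ..
  qed
  moreover have "t dvd (\<Prod>i<s. map_poly e (fs i) ^ ms i)" using Fdt F_prod by (metis dvd_triv_right)
  ultimately obtain j where j: "j < s" "map_poly e (fs j) dvd t"
    using irr_prod_factor[OF irrL] by blast
  then obtain t' where t': "t = map_poly e (fs j) * t'" by (elim dvdE)
  let ?G = "map_poly e (f div fs j)"
  have "map_poly e (fs j) * ?G = F" using F_split[OF j(1)] by simp
  also have "\<dots> = map_poly e (fs j) * (d * t')" unfolding Fdt t' by (rule mult.left_commute)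
  finally have "map_poly e (fs j) * ?G = map_poly e (fs j) * (d * t')" .
  moreover have "map_poly e (fs j) \<noteq> 0" using fs_nz[OF j(1)] by simp
  ultimately have G: "?G = d * t'" by simp
  have GC: "pev TL ?G v \<in> C" unfolding G mult.commute[of d]
    using closed_pev[OF C(1) dC] by (simp add: L.pev_mult)
  have Gv: "pev TL ?G v = mapv e (pev TK (f div fs j) v0)"
    by (simp add: v_def pev_transfer)
  have "pev TL ?G v \<noteq> 0"
  proof
    assume "pev TL ?G v = 0"
    then have "F dvd ?G" by (rule FactA)
    moreover have "?G \<noteq> 0" using F_split[OF j(1)] F_nz by auto
    ultimately have "degree F \<le> degree ?G" by (rule dvd_imp_degree_le)
    moreover have "degree F = degree (map_poly e (fs j)) + degree ?G"
      using F_split[OF j(1)] F_nz by (metis degree_mult_eq mult_eq_0_iff)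
    ultimately have "degree (map_poly e (fs j)) = 0" by simp
    then have "is_unit (map_poly e (fs j))"
      using fs_nz[OF j(1)] by (simp add: is_unit_iff_degree)
    with irrL j(1) show False by (auto simp: irreducible_def)
  qed
  then have "pev TK (f div fs j) v0 \<noteq> 0" using Gv by auto
  then have "wt_R e (pev TL ?G v) = 1" unfolding Gv by (rule wt_mapv)
  then show ?thesis using M1_eq1 GC \<open>pev TL ?G v \<noteq> 0\<close> by blast
qed


lemma S_fin: "finite {wt_R e c | c. c \<in> (C :: ('l^'n) set) \<and> c \<noteq> 0}"
proof -
  let ?S = "{wt_R e c | c. c \<in> C \<and> c \<noteq> 0}"
  have "?S \<subseteq> {..CARD('n)}"
  proof
    fix x assume "x \<in> ?S"
    then obtain c :: "'l^'n" where "x = wt_R e c" by blast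
    then show "x \<in> {..CARD('n)}" using wt_le[of c] by simp
  qed
  then show "finite ?S" by (rule finite_subset) simp
qed

lemma dir1:
  assumes i: "i < s" and red: "\<not> irreducible (map_poly e (fs i))"
  shows "\<exists>C. M_cyclic_code e M C \<and> C \<noteq> {0} \<and> M1 e C \<noteq> 1"
proof -
  let ?Fi = "map_poly e (fs i)"
  have Fi0: "?Fi \<noteq> 0" "\<not> is_unit ?Fi" using fs_nz[OF i] fs_nonunit[OF i] by (simp_all add: mp_unit_iff)
  with red obtain a b where ab: "?Fi = a * b" "\<not> is_unit a" "\<not> is_unit b"
    by (auto simp: irreducible_def)
  let ?G = "map_poly e (f div fs i)"
  have FabG: "F = a * (b * ?G)" using F_split[OF i] ab(1) by (simp add: mult.assoc)
  define C where "C = {c. pev TL a c = 0}"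
  have code: "M_cyclic_code e M C"
    unfolding M_cyclic_code_def linear_code_def C_def
    by (simp add: L.pev_x_add L.pev_x_scale L.pev_T)
  define w where "w = pev TL (b * ?G) v"
  have "pev TL a w = pev TL F v" unfolding w_def FabG by (simp add: L.pev_mult)
  then have wC: "w \<in> C" by (simp add: C_def Fv)
  have "w \<noteq> 0"
  proof
    assume "w = 0"
    then have "F dvd b * ?G" unfolding w_def by (rule FactA)
    moreover have "b * ?G \<noteq> 0" using FabG F_nz by auto
    ultimately have "degree F \<le> degree (b * ?G)" by (rule dvd_imp_degree_le)
    moreover have "a \<noteq> 0" using FabG F_nz by auto
    moreover have "degree F = degree a + degree (b * ?G)"
      using FabG F_nz by (metis degree_mult_eq mult_eq_0_iff)
    ultimately have "degree a = 0" "a \<noteq> 0" by simp_all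
    then have "is_unit a" by (simp add: is_unit_iff_degree)
    with ab(2) show False ..
  qed
  then have CN: "C \<noteq> {0}" using wC by auto
  have "M1 e C \<noteq> 1"
  proof
    assume M1: "M1 e C = 1"
    let ?S = "{wt_R e c | c. c \<in> C \<and> c \<noteq> 0}"
    have "?S \<noteq> {}" using wC \<open>w \<noteq> 0\<close> by blast
    then have "Min ?S \<in> ?S" using S_fin by (intro Min_in) auto
    then obtain c where c: "c \<in> C" "c \<noteq> 0" "wt_R e c = 1" using M1 unfolding M1_def by auto
    obtain l u where lu: "l \<noteq> 0" "c = l *s mapv e u" using wt_one[OF c(3)] by blast
    have "u \<noteq> 0" using c(2) lu by auto
    have "l *s pev TL a (mapv e u) = 0" using c(1) lu by (simp add: C_def L.pev_x_scale)
    then have au: "pev TL a (mapv e u) = 0" using lu(1) by simp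
    obtain q0 where q0: "u = pev TK q0 v0" using genK by blast
    have "mapv e u = pev TL (map_poly e q0) v" by (simp add: q0 v_def pev_transfer)
    then have "pev TL (a * map_poly e q0) v = 0" using au by (simp add: L.pev_mult)
    then have FaQ: "F dvd a * map_poly e q0" by (rule FactA)
    obtain d0 x y where bz: "d0 = x * f + y * q0" "d0 dvd f" "d0 dvd q0" using poly_bezout[of f q0] by blast
    obtain f' where ff: "f = d0 * f'" using bz(2) by (elim dvdE)
    have "d0 \<noteq> 0" using ff f_nz by auto
    have mbz: "map_poly e d0 = map_poly e x * F + map_poly e y * map_poly e q0"
      using bz(1) by (simp add: mp_add mp_mult)
    have "F dvd a * map_poly e d0"
    proof -
      have "a * map_poly e d0 = (a * map_poly e x) * F + map_poly e y * (a * map_poly e q0)"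
        unfolding mbz by (simp add: algebra_simps)
      moreover have "F dvd (a * map_poly e x) * F + map_poly e y * (a * map_poly e q0)"
        using FaQ by (intro dvd_add) auto
      ultimately show ?thesis by simp
    qed
    moreover have "F = map_poly e d0 * map_poly e f'" using ff by (simp add: mp_mult)
    ultimately have "map_poly e d0 * map_poly e f' dvd map_poly e d0 * a" by (simp add: mult.commute)
    then have f'a: "map_poly e f' dvd a" using \<open>d0 \<noteq> 0\<close> by simp
    have "f' \<noteq> 0" using ff f_nz by auto
    have "\<not> is_unit f'"
    proof
      assume "is_unit f'"
      then have "f dvd d0" using ff by (metis dvd_mult_unit_iff dvd_refl)
      then have "f dvd q0" using bz(3) by (rule dvd_trans)
      then obtain k where "q0 = f * k" by (elim dvdE)
      then have "u = 0" using q0 by (simp add: K.pev_mult f_kills)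
      with \<open>u \<noteq> 0\<close> show False ..
    qed
    moreover have "f' dvd (\<Prod>i<s. fs i ^ ms i)" using ff unfolding f_def by (metis dvd_triv_right)
    ultimately obtain j where j: "j < s" "fs j dvd f'"
      using irr_prod_factor[OF irr _ \<open>f' \<noteq> 0\<close>] by blast
    have Fj_a: "map_poly e (fs j) dvd a" using mp_dvd[OF j(2)] f'a by (rule dvd_trans)
    then have Fj_Fi: "map_poly e (fs j) dvd ?Fi" unfolding ab(1) by (rule dvd_mult2)
    show False
    proof (cases "j = i")
      case True
      obtain k where k: "a = ?Fi * k" using Fj_a unfolding True by (elim dvdE)
      then have "?Fi * 1 = ?Fi * (k * b)" using ab(1) by (metis mult.assoc mult_1_right)
      then have "k * b = 1" using Fi0(1) by (metis mult_left_cancel)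
      then have "is_unit b" by (metis dvdI mult.commute)
      with ab(3) show False ..
    next
      case False
      have "fs j \<noteq> fs i" using dist False j(1) i by (auto simp: inj_on_def)
      obtain g x' y' where gb: "g = x' * fs j + y' * fs i" "g dvd fs j" "g dvd fs i"
        using poly_bezout by blast
      have "irreducible (fs j)" using irr j(1) by blast
      then have "fs j dvd g \<or> is_unit g" using gb(2) by (rule irreducibleD')
      then show False
      proof
        assume "fs j dvd g"
        then have ji: "fs j dvd fs i" using gb(3) by (rule dvd_trans)
        have "irreducible (fs i)" using irr i by blast
        then have "fs i dvd fs j \<or> is_unit (fs j)" using ji by (rule irreducibleD')
        then have ij: "fs i dvd fs j" using fs_nonunit[OF j(1)] by blast
        have "fs j = fs i" using monic_assoc[OF ji ij] monic i j(1) by blast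
        with \<open>fs j \<noteq> fs i\<close> show False ..
      next
        assume "is_unit g"
        then obtain k where k: "1 = g * k" by (elim dvdE)
        then have "1 = map_poly e g * map_poly e k" by (metis mp_1 mp_mult)
        moreover have "map_poly e g = map_poly e x' * map_poly e (fs j) + map_poly e y' * ?Fi"
          using gb(1) by (simp add: mp_add mp_mult)
        moreover have "map_poly e (fs j) dvd (map_poly e x' * map_poly e (fs j) + map_poly e y' * ?Fi) * map_poly e k"
          using Fj_Fi by (intro dvd_mult2 dvd_add dvd_mult) simp_all
        ultimately have "map_poly e (fs j) dvd 1" by simp
        then have "is_unit (fs j)" by (simp add: mp_unit_iff)
        with fs_nonunit[OF j(1)] show False ..
      qed
    qed
  qed
  then show ?thesis using code CN by blast
qed

end

theorem corollary4:
  fixes e :: "'k::field \<Rightarrow> 'l::field"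
    and M :: "'k ^ 'n ^ 'n"
    and fs :: "nat \<Rightarrow> 'k poly" and ms :: "nat \<Rightarrow> nat" and s :: nat
  assumes ext: "field_ext e"
    and fin: "finite_degree e"
    and deg: "CARD('n) \<le> degree_ext e"
    and cyc: "cyclic_matrix M"
    and minp: "is_min_poly M (\<Prod>i<s. fs i ^ ms i)"
    and monic: "\<forall>i<s. lead_coeff (fs i) = 1"
    and irr: "\<forall>i<s. irreducible (fs i)"
    and dist: "inj_on fs {..<s}"
    and mpos: "\<forall>i<s. ms i \<ge> 1"
  shows "(\<forall>C :: ('l ^ 'n) set. M_cyclic_code e M C \<and> C \<noteq> {0} \<longrightarrow> M1 e C = 1)
     \<longleftrightarrow> (\<forall>i<s. irreducible (map_poly e (fs i)))"
proof -
  interpret cset e M fs ms s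
    by (unfold_locales) (use assms in auto)
  show ?thesis
  proof
    assume H: "\<forall>C :: ('l ^ 'n) set. M_cyclic_code e M C \<and> C \<noteq> {0} \<longrightarrow> M1 e C = 1"
    show "\<forall>i<s. irreducible (map_poly e (fs i))"
    proof (intro allI impI)
      fix i assume "i < s"
      show "irreducible (map_poly e (fs i))"
      proof (rule ccontr)
        assume "\<not> irreducible (map_poly e (fs i))"
        from dir1[OF \<open>i < s\<close> this] H show False by blast
      qed
    qed
  next
    assume "\<forall>i<s. irreducible (map_poly e (fs i))"
    then show "\<forall>C :: ('l ^ 'n) set. M_cyclic_code e M C \<and> C \<noteq> {0} \<longrightarrow> M1 e C = 1"
      using dir2 by blast
  qed
qed

end
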